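(* Let $\mathcal G=(\mathcal V,\mathcal E)$ be a connected undirected graph on $N\ge 2$ nodes, let $a(0)\in\mathbb R^N$ be arbitrary, let $p\in[0,1]$, and let $(a(l))_{l\ge 0}$ be generated by the sample greedy gossip (SGG) iteration with node activation probability $p$. Then $$\lim_{l\to\infty}\mathbb E\big[\|a(l)-\bar a\|^2\big]=0,$$ i.e. SGG converges (in mean square) to the average state $\bar a$.
   Context: Graph: $\mathcal V=\{1,\dots,N\}$, and $\mathcal N_s=\{t\in\mathcal V: (s,t)\in\mathcal E,\ t\neq s\}$ is the neighbour set of node $s$ (nonempty for all $s$ by connectivity). Each node $s$ holds a scalar $a_s(l)$; $a(l)=(a_1(l),\dots,a_N(l))^T$. $\bar a\in\mathbb R^N$ is the vector all of whose entries equal $\frac1N\sum_{s=1}^N a_s(0)$. $\|\cdot\|$ is the Euclidean norm. SGG iteration (step $l\ge1$, all random choices independent across steps and of the past): a node $s$ is chosen uniformly at random from $\mathcal V$; each $t\in\mathcal N_s$ independently joins an active set $\mathcal A_s\subseteq\mathcal N_s$ with probability $p$. If $\mathcal A_s\neq\emptyset$, let $t^*$ be a maximiser of $(a_s(l-1)-a_t(l-1))^2$ over $t\in\mathcal A_s$ (ties broken arbitrarily); if $\mathcal A_s=\emptyset$, let $t^*$ be chosen uniformly at random from $\mathcal N_s$. Then $a_s(l)=a_{t^*}(l)=\tfrac12\big(a_s(l-1)+a_{t^*}(l-1)\big)$, and $a_u(l)=a_u(l-1)$ for all $u\notin\{s,t^*\}$. *)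

theory Defs
  imports "HOL-Analysis.Analysis" "HOL-Probability.Probability"
begin

definition nbrs :: "'a set \<Rightarrow> ('a \<Rightarrow> 'a \<Rightarrow> bool) \<Rightarrow> 'a \<Rightarrow> 'a set" where
  "nbrs V E s = {t \<in> V. E s t \<and> t \<noteq> s}"

definition connected_undirected_graph :: "'a set \<Rightarrow> ('a \<Rightarrow> 'a \<Rightarrow> bool) \<Rightarrow> bool" where
  "connected_undirected_graph V E \<longleftrightarrow>
     finite V \<and> (\<forall>u v. E u v \<longrightarrow> u \<in> V \<and> v \<in> V) \<and> (\<forall>u v. E u v \<longrightarrow> E v u) \<and>
     (\<forall>u\<in>V. \<forall>v\<in>V. (\<lambda>x y. E x y \<and> x \<noteq> y)\<^sup>*\<^sup>* u v)"

definition valid_tiebreak :: "'a set \<Rightarrow> ('a \<Rightarrow> 'a \<Rightarrow> bool) \<Rightarrow>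
    (nat \<Rightarrow> ('a \<Rightarrow> real) \<Rightarrow> 'a \<Rightarrow> 'a set \<Rightarrow> 'a) \<Rightarrow> bool" where
  "valid_tiebreak V E sel \<longleftrightarrow>
     (\<forall>l a s A. s \<in> V \<longrightarrow> A \<subseteq> nbrs V E s \<longrightarrow> A \<noteq> {} \<longrightarrow>
        sel l a s A \<in> A \<and> (\<forall>t\<in>A. (a s - a t)^2 \<le> (a s - a (sel l a s A))^2))"

definition avg_pair :: "('a \<Rightarrow> real) \<Rightarrow> 'a \<Rightarrow> 'a \<Rightarrow> ('a \<Rightarrow> real)" where
  "avg_pair a s t = (let m = (a s + a t) / 2 in a(s := m, t := m))"

definition sgg_step :: "'a set \<Rightarrow> ('a \<Rightarrow> 'a \<Rightarrow> bool) \<Rightarrow> real \<Rightarrow>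
    (nat \<Rightarrow> ('a \<Rightarrow> real) \<Rightarrow> 'a \<Rightarrow> 'a set \<Rightarrow> 'a) \<Rightarrow> nat \<Rightarrow> ('a \<Rightarrow> real) \<Rightarrow> ('a \<Rightarrow> real) pmf" where
  "sgg_step V E p sel l a =
     do {
       s \<leftarrow> pmf_of_set V;
       act \<leftarrow> Pi_pmf (nbrs V E s) False (\<lambda>_. bernoulli_pmf p);
       let A = {t \<in> nbrs V E s. act t};
       t \<leftarrow> (if A \<noteq> {} then return_pmf (sel l a s A) else pmf_of_set (nbrs V E s));
       return_pmf (avg_pair a s t)
     }"

primrec sgg_dist :: "'a set \<Rightarrow> ('a \<Rightarrow> 'a \<Rightarrow> bool) \<Rightarrow> real \<Rightarrow>
    (nat \<Rightarrow> ('a \<Rightarrow> real) \<Rightarrow> 'a \<Rightarrow> 'a set \<Rightarrow> 'a) \<Rightarrow> ('a \<Rightarrow> real) \<Rightarrow> nat \<Rightarrow> ('a \<Rightarrow> real) pmf" where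
  "sgg_dist V E p sel a0 0 = return_pmf a0"
| "sgg_dist V E p sel a0 (Suc l) = bind_pmf (sgg_dist V E p sel a0 l) (sgg_step V E p sel (Suc l))"

end

theory Submission
  imports Defs
begin

lemma exp_bind:
  fixes h :: "_ \<Rightarrow> real"
  assumes "finite (set_pmf p)" "\<And>x. x \<in> set_pmf p \<Longrightarrow> finite (set_pmf (f x))"
  shows "measure_pmf.expectation (bind_pmf p f) h =
         measure_pmf.expectation p (\<lambda>x. measure_pmf.expectation (f x) h)"
  using assms
  by (subst pmf_expectation_bind[of "set_pmf p"]) (auto simp: integral_measure_pmf[of "set_pmf p"])

definition Fv :: "'a set \<Rightarrow> real \<Rightarrow> ('a \<Rightarrow> real) \<Rightarrow> real" where
  "Fv V c a = (\<Sum>x\<in>V. (a x - c)^2)"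

definition Tdist where
  "Tdist V E sel l a s act = (let A = {t \<in> nbrs V E s. act t} in
      if A \<noteq> {} then return_pmf (sel l a s A) else pmf_of_set (nbrs V E s))"

lemma step_eq: "sgg_step V E p sel l a = bind_pmf (pmf_of_set V) (\<lambda>s.
   bind_pmf (Pi_pmf (nbrs V E s) False (\<lambda>_. bernoulli_pmf p))
    (\<lambda>act. map_pmf (avg_pair a s) (Tdist V E sel l a s act)))"
  by (simp add: sgg_step_def Tdist_def Let_def map_pmf_def)

lemma sum2:
  assumes "finite V" "s \<in> V" "t \<in> V" "s \<noteq> t"
  shows "(\<Sum>x\<in>V. f x) = f s + f t + (\<Sum>x\<in>V-{s,t}. f x)"
proof -
  have "(\<Sum>x\<in>V. f x) = f s + (\<Sum>x\<in>V-{s}. f x)" using assms by (simp add: sum.remove)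
  also have "(\<Sum>x\<in>V-{s}. f x) = f t + (\<Sum>x\<in>V-{s}-{t}. f x)" using assms by (simp add: sum.remove)
  finally show ?thesis by (simp add: set_diff_eq add.assoc)
qed

lemma F_avg:
  assumes "finite V" "s \<in> V" "t \<in> V" "s \<noteq> t"
  shows "Fv V c (avg_pair a s t) = Fv V c a - (a s - a t)^2/2"
proof -
  have eq: "(\<Sum>x\<in>V-{s,t}. (avg_pair a s t x - c)^2) = (\<Sum>x\<in>V-{s,t}. (a x - c)^2)"
    by (rule sum.cong) (auto simp: avg_pair_def Let_def)
  show ?thesis unfolding Fv_def
    using sum2[OF assms, of "\<lambda>x. (avg_pair a s t x - c)^2"] sum2[OF assms, of "\<lambda>x. (a x - c)^2"] eq assms
    by (simp add: avg_pair_def Let_def power2_eq_square field_simps)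
qed

lemma sum_avg:
  assumes "finite V" "s \<in> V" "t \<in> V" "s \<noteq> t"
  shows "(\<Sum>x\<in>V. avg_pair a s t x) = (\<Sum>x\<in>V. a x)"
proof -
  have eq: "(\<Sum>x\<in>V-{s,t}. avg_pair a s t x) = (\<Sum>x\<in>V-{s,t}. a x)"
    by (rule sum.cong) (auto simp: avg_pair_def Let_def)
  show ?thesis
    using sum2[OF assms, of "\<lambda>x. avg_pair a s t x"] sum2[OF assms, of "\<lambda>x. a x"] eq assms
    by (simp add: avg_pair_def Let_def)
qed


lemma scaleR_div: "(x::real) /\<^sub>R r = x / r"
  by (simp add: field_simps)

definition Ms :: "'a set \<Rightarrow> ('a \<Rightarrow> 'a \<Rightarrow> bool) \<Rightarrow> ('a \<Rightarrow> real) \<Rightarrow> 'a \<Rightarrow> real" where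
  "Ms V E a s = Max ((\<lambda>t. (a s - a t)^2) ` nbrs V E s)"

context
  fixes V :: "'a set" and E :: "'a \<Rightarrow> 'a \<Rightarrow> bool" and p :: real
    and sel :: "nat \<Rightarrow> ('a \<Rightarrow> real) \<Rightarrow> 'a \<Rightarrow> 'a set \<Rightarrow> 'a"
  assumes G: "connected_undirected_graph V E"
    and N2: "card V \<ge> 2"
    and p0: "0 \<le> p" and p1: "p \<le> 1"
    and TB: "valid_tiebreak V E sel"
begin

lemma finV: "finite V"
  using G by (simp add: connected_undirected_graph_def)

lemma Vne: "V \<noteq> {}" using N2 by auto

lemma nbrs_sub: "nbrs V E s \<subseteq> V" by (auto simp: nbrs_def)

lemma fin_nbrs: "finite (nbrs V E s)" using finV nbrs_sub finite_subset by blast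

lemma nbrs_ne: assumes "s \<in> V" shows "nbrs V E s \<noteq> {}"
proof -
  obtain v where v: "v \<in> V" "v \<noteq> s"
  proof -
    have "\<not> V \<subseteq> {s}"
    proof
      assume "V \<subseteq> {s}"
      then have "card V \<le> card {s}" by (intro card_mono) auto
      then show False using N2 by simp
    qed
    then show ?thesis using that by blast
  qed
  have "(\<lambda>x y. E x y \<and> x \<noteq> y)\<^sup>*\<^sup>* s v" using G assms v by (auto simp: connected_undirected_graph_def)
  then obtain y where "E s y" "s \<noteq> y"
    using v(2) by (cases rule: converse_rtranclpE) auto
  then have "y \<in> nbrs V E s" using G by (auto simp: nbrs_def connected_undirected_graph_def)
  then show ?thesis by auto
qed

lemma Tdist_supp: assumes "s \<in> V" shows "set_pmf (Tdist V E sel l a s act) \<subseteq> nbrs V E s"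
proof -
  let ?A = "{t \<in> nbrs V E s. act t}"
  show ?thesis
  proof (cases "?A = {}")
    case True then show ?thesis using nbrs_ne[OF assms] fin_nbrs by (simp add: Tdist_def)
  next
    case False
    have sub: "?A \<subseteq> nbrs V E s" by auto
    have "sel l a s ?A \<in> ?A" using TB assms False sub unfolding valid_tiebreak_def by blast
    then show ?thesis using False by (auto simp: Tdist_def Let_def)
  qed
qed

lemma fin_Pi: "finite (set_pmf (Pi_pmf (nbrs V E s) False (\<lambda>_. bernoulli_pmf p)))"
  by (rule finite_subset[OF set_Pi_pmf_subset'[OF fin_nbrs]]) (auto intro!: finite_PiE_dflt simp: fin_nbrs)

lemma step_supp: assumes "a' \<in> set_pmf (sgg_step V E p sel l a)"
  shows "\<exists>s\<in>V. \<exists>t\<in>nbrs V E s. a' = avg_pair a s t"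
proof -
  from assms obtain s act t where "s \<in> V" "t \<in> set_pmf (Tdist V E sel l a s act)" "a' = avg_pair a s t"
    unfolding step_eq using finV Vne by (auto simp: set_bind_pmf)
  then show ?thesis using Tdist_supp by blast
qed

lemma step_fin: "finite (set_pmf (sgg_step V E p sel l a))"
proof -
  have "set_pmf (sgg_step V E p sel l a) \<subseteq> (\<lambda>(s,t). avg_pair a s t) ` (V \<times> V)"
    using step_supp nbrs_sub by fastforce
  then show ?thesis using finV finite_subset by blast
qed

lemma dist_inv: "finite (set_pmf (sgg_dist V E p sel a0 l)) \<and>
   (\<forall>a\<in>set_pmf (sgg_dist V E p sel a0 l). (\<Sum>x\<in>V. a x) = (\<Sum>x\<in>V. a0 x))"
proof (induction l)
  case 0 then show ?case by simp
next
  case (Suc l)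
  have "(\<Sum>x\<in>V. a' x) = (\<Sum>x\<in>V. a0 x)" if h: "a \<in> set_pmf (sgg_dist V E p sel a0 l)"
     "a' \<in> set_pmf (sgg_step V E p sel (Suc l) a)" for a a'
  proof -
    obtain s t where st: "s \<in> V" "t \<in> nbrs V E s" "a' = avg_pair a s t" using step_supp[OF h(2)] by blast
    then have "t \<in> V" "s \<noteq> t" by (auto simp: nbrs_def)
    then show ?thesis using sum_avg[OF finV st(1) _ _, of t a] st Suc h(1) by simp
  qed
  then show ?case using Suc step_fin by auto
qed


lemma tb: assumes "s \<in> V" "A \<subseteq> nbrs V E s" "A \<noteq> {}"
  shows "sel l a s A \<in> A \<and> (\<forall>t\<in>A. (a s - a t)^2 \<le> (a s - a (sel l a s A))^2)"
  using TB assms unfolding valid_tiebreak_def by blast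

lemma key: assumes s: "s \<in> V"
  shows "Ms V E a s / card (nbrs V E s) \<le> measure_pmf.expectation (Pi_pmf (nbrs V E s) False (\<lambda>_. bernoulli_pmf p))
           (\<lambda>act. measure_pmf.expectation (Tdist V E sel l a s act) (\<lambda>t. (a s - a t)^2))"
proof -
  let ?Nb = "nbrs V E s"
  let ?P = "Pi_pmf ?Nb False (\<lambda>_. bernoulli_pmf p)"
  define d where "d = card ?Nb"
  define M where "M = Ms V E a s"
  define g where "g act = measure_pmf.expectation (Tdist V E sel l a s act) (\<lambda>t. (a s - a t)^2)" for act
  have dpos: "d > 0" unfolding d_def using fin_nbrs nbrs_ne[OF s] by (simp add: card_gt_0_iff)
  have "M \<in> (\<lambda>t. (a s - a t)^2) ` ?Nb" unfolding M_def Ms_def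
    by (rule Max_in) (auto simp: fin_nbrs nbrs_ne[OF s])
  then obtain tm where tm: "tm \<in> ?Nb" "(a s - a tm)^2 = M" by auto
  have M0: "0 \<le> M" unfolding tm(2)[symmetric] by simp
  have g_ge: "M * indicator {act. act tm} act + (M/d) * indicator {\<lambda>_. False} act \<le> g act" for act
  proof (cases "act tm")
    case True
    let ?A = "{t \<in> ?Nb. act t}"
    have ne: "?A \<noteq> {}" using True tm by auto
    have sub: "?A \<subseteq> ?Nb" by auto
    have tmA: "tm \<in> ?A" using True tm by auto
    have "(a s - a tm)^2 \<le> (a s - a (sel l a s ?A))^2"
      using tb[OF s sub ne] tmA by blast
    moreover have "g act = (a s - a (sel l a s ?A))^2" unfolding g_def Tdist_def using ne by (simp add: Let_def)
    moreover have "act \<noteq> (\<lambda>_. False)" using True by auto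
    ultimately show ?thesis using tm True by (simp add: indicator_def)
  next
    case False
    show ?thesis
    proof (cases "act = (\<lambda>_. False)")
      case True
      then have "g act = (\<Sum>t\<in>?Nb. (a s - a t)^2) / d" unfolding g_def Tdist_def d_def
        using nbrs_ne[OF s] fin_nbrs by (simp add: integral_pmf_of_set)
      moreover have "M \<le> (\<Sum>t\<in>?Nb. (a s - a t)^2)"
        using tm member_le_sum[of tm ?Nb "\<lambda>t. (a s - a t)^2"] fin_nbrs by simp
      ultimately show ?thesis using False True dpos by (simp add: indicator_def divide_right_mono)
    next
      case False2: False
      have "0 \<le> g act" unfolding g_def by (rule integral_nonneg_AE) auto
      then show ?thesis using False False2 by (simp add: indicator_def)
    qed
  qed
  have int: "integrable ?P f" for f :: "_ \<Rightarrow> real" by (rule integrable_measure_pmf_finite[OF fin_Pi])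
  have m1: "measure ?P {act. act tm} = p"
  proof -
    have "measure ?P {act. act tm} = measure (map_pmf (\<lambda>f. f tm) ?P) {True}" by (simp add: measure_map_pmf vimage_def)
    also have "map_pmf (\<lambda>f. f tm) ?P = bernoulli_pmf p" using tm(1) by (simp add: Pi_pmf_component[OF fin_nbrs])
    also have "measure (bernoulli_pmf p) {True} = p" by (simp add: measure_pmf_single p0 p1)
    finally show ?thesis .
  qed
  have m2: "measure ?P {\<lambda>_. False} = (1-p)^d"
    using p0 p1 by (simp add: measure_pmf_single pmf_Pi[OF fin_nbrs] d_def)
  have eq: "measure_pmf.expectation ?P (\<lambda>act. M * indicator {act. act tm} act + (M/d) * indicator {\<lambda>_. False} act)
        = M * p + (M/d) * (1-p)^d"
    by (simp add: Bochner_Integration.integral_add[OF int int] m1 m2)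
  have "measure_pmf.expectation ?P (\<lambda>act. M * indicator {act. act tm} act + (M/d) * indicator {\<lambda>_. False} act)
      \<le> measure_pmf.expectation ?P g"
    by (rule Bochner_Integration.integral_mono[OF int int]) (rule g_ge)
  then have ge: "M * p + (M/d) * (1-p)^d \<le> measure_pmf.expectation ?P g" using eq by simp
  have "1 + real d * (-p) \<le> (1 + -p)^d" using p1 by (intro Bernoulli_inequality) auto
  then have "(M/d) * (1 - d*p) \<le> (M/d) * (1-p)^d" using M0 dpos by (intro mult_left_mono) auto
  moreover have "(M/d) * (1 - d*p) = M/d - M*p" using dpos by (simp add: field_simps)
  ultimately have "M/d \<le> M * p + (M/d) * (1-p)^d" by linarith
  with ge show ?thesis unfolding g_def M_def d_def by simp
qed


lemma Ms_nonneg: assumes "s \<in> V" shows "0 \<le> Ms V E a s"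
proof -
  obtain t where t: "t \<in> nbrs V E s" using nbrs_ne[OF assms] by blast
  have "(a s - a t)^2 \<le> Ms V E a s" unfolding Ms_def by (rule Max_ge) (use t fin_nbrs in auto)
  moreover have "0 \<le> (a s - a t)^2" by simp
  ultimately show ?thesis by linarith
qed

lemma inner_eq: assumes s: "s \<in> V"
  shows "measure_pmf.expectation (Tdist V E sel l a s act) (\<lambda>t. Fv V c (avg_pair a s t))
       = Fv V c a - measure_pmf.expectation (Tdist V E sel l a s act) (\<lambda>t. (a s - a t)^2) / 2"
proof -
  let ?T = "Tdist V E sel l a s act"
  have fin: "finite (set_pmf ?T)" by (rule finite_subset[OF Tdist_supp[OF s] fin_nbrs])
  have int: "integrable ?T f" for f :: "_ \<Rightarrow> real" by (rule integrable_measure_pmf_finite[OF fin])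
  have "measure_pmf.expectation ?T (\<lambda>t. Fv V c (avg_pair a s t))
      = measure_pmf.expectation ?T (\<lambda>t. Fv V c a - (a s - a t)^2 / 2)"
  proof (rule integral_cong_AE)
    show "AE t in measure_pmf ?T. Fv V c (avg_pair a s t) = Fv V c a - (a s - a t)^2 / 2"
    proof (rule AE_pmfI)
      fix t assume "t \<in> set_pmf ?T"
      then have "t \<in> nbrs V E s" using Tdist_supp[OF s] by blast
      then have tV: "t \<in> V" and st: "s \<noteq> t" by (auto simp: nbrs_def)
      show "Fv V c (avg_pair a s t) = Fv V c a - (a s - a t)^2 / 2" by (rule F_avg[OF finV s tV st])
    qed
  qed auto
  also have "\<dots> = Fv V c a - measure_pmf.expectation ?T (\<lambda>t. (a s - a t)^2) / 2"
    by (simp add: Bochner_Integration.integral_diff[OF int int])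
  finally show ?thesis .
qed

lemma step_exp:
  "measure_pmf.expectation (sgg_step V E p sel l a) (Fv V c)
     \<le> Fv V c a - (\<Sum>s\<in>V. Ms V E a s) / (2 * real (card V) ^ 2)"
proof -
  let ?P = "\<lambda>s. Pi_pmf (nbrs V E s) False (\<lambda>_. bernoulli_pmf p)"
  let ?T = "\<lambda>s act. Tdist V E sel l a s act"
  let ?G = "\<lambda>s. measure_pmf.expectation (?P s) (\<lambda>act. measure_pmf.expectation (?T s act) (\<lambda>t. (a s - a t)^2))"
  define N where "N = real (card V)"
  have Npos: "N > 0" using finV Vne N_def by (simp add: card_gt_0_iff)
  have finT: "finite (set_pmf (?T s act))" if "s \<in> V" for s act
    by (rule finite_subset[OF Tdist_supp[OF that] fin_nbrs])
  have finInner: "s \<in> V \<Longrightarrow> finite (set_pmf (bind_pmf (?P s) (\<lambda>act. map_pmf (avg_pair a s) (?T s act))))" for s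
    using fin_Pi finT by (auto simp: set_bind_pmf)
  have per_s: "measure_pmf.expectation (bind_pmf (?P s) (\<lambda>act. map_pmf (avg_pair a s) (?T s act))) (Fv V c)
        = Fv V c a - ?G s / 2" if s: "s \<in> V" for s
  proof -
    have intP: "integrable (?P s) f" for f :: "_ \<Rightarrow> real" by (rule integrable_measure_pmf_finite[OF fin_Pi])
    have "measure_pmf.expectation (bind_pmf (?P s) (\<lambda>act. map_pmf (avg_pair a s) (?T s act))) (Fv V c)
        = measure_pmf.expectation (?P s) (\<lambda>act. measure_pmf.expectation (?T s act) (\<lambda>t. Fv V c (avg_pair a s t)))"
      using fin_Pi finT[OF s] by (subst exp_bind) auto
    also have "\<dots> = measure_pmf.expectation (?P s) (\<lambda>act. Fv V c a - measure_pmf.expectation (?T s act) (\<lambda>t. (a s - a t)^2) / 2)"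
      using inner_eq[OF s] by simp
    also have "\<dots> = Fv V c a - ?G s / 2"
      by (simp add: Bochner_Integration.integral_diff[OF intP intP])
    finally show ?thesis .
  qed
  have bnd: "Fv V c a - ?G s / 2 \<le> Fv V c a - Ms V E a s / (2 * N)" if s: "s \<in> V" for s
  proof -
    have d: "0 < real (card (nbrs V E s))" "real (card (nbrs V E s)) \<le> N"
      using nbrs_ne[OF s] fin_nbrs card_mono[OF finV nbrs_sub] N_def by (auto simp: card_gt_0_iff)
    have "Ms V E a s / N \<le> Ms V E a s / card (nbrs V E s)"
      using d Ms_nonneg[OF s] by (intro divide_left_mono) auto
    also have "\<dots> \<le> ?G s" by (rule key[OF s])
    finally show ?thesis using Npos by (simp add: field_simps)
  qed
  have "measure_pmf.expectation (sgg_step V E p sel l a) (Fv V c)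
      = (\<Sum>s\<in>V. measure_pmf.expectation (bind_pmf (?P s) (\<lambda>act. map_pmf (avg_pair a s) (?T s act))) (Fv V c) /\<^sub>R real (card V))"
    unfolding step_eq by (rule pmf_expectation_bind_pmf_of_set[OF Vne finV finInner])
  also have "\<dots> = (\<Sum>s\<in>V. (Fv V c a - ?G s / 2) / N)"
  proof (rule sum.cong[OF refl])
    fix s assume sV: "s \<in> V"
    show "measure_pmf.expectation (bind_pmf (?P s) (\<lambda>act. map_pmf (avg_pair a s) (?T s act))) (Fv V c) /\<^sub>R real (card V)
        = (Fv V c a - ?G s / 2) / N"
      unfolding per_s[OF sV] N_def by (rule scaleR_div)
  qed
  also have "\<dots> \<le> (\<Sum>s\<in>V. (Fv V c a - Ms V E a s / (2 * N)) / N)"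
    using bnd Npos by (intro sum_mono divide_right_mono) auto
  also have "\<dots> = Fv V c a - (\<Sum>s\<in>V. Ms V E a s) / (2 * N ^ 2)"
    using Npos by (simp add: sum_divide_distrib[symmetric] sum_subtractf N_def power2_eq_square field_simps)
  finally show ?thesis unfolding N_def .
qed


lemma poinc:
  assumes c: "c = (\<Sum>x\<in>V. a x) / real (card V)"
  shows "Fv V c a \<le> real (card V) ^ 5 * (\<Sum>s\<in>V. Ms V E a s)"
proof -
  define N where "N = real (card V)"
  define W where "W = (\<Sum>s\<in>V. Ms V E a s)"
  define R where "R = {(x,y). E x y \<and> x \<noteq> y}"
  have Npos: "N > 0" using finV Vne N_def by (simp add: card_gt_0_iff)
  have W0: "0 \<le> W" unfolding W_def by (rule sum_nonneg) (rule Ms_nonneg)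
  have RV: "R \<subseteq> V \<times> V" using G by (auto simp: R_def connected_undirected_graph_def)
  have finR: "finite R" using RV finV finite_subset by blast
  have cardR: "card R \<le> card V * card V"
    using card_mono[OF _ RV] finV by (simp add: card_cartesian_product)
  have edge: "\<bar>a x - a y\<bar> \<le> sqrt W" if "(x,y) \<in> R" for x y
  proof -
    have xV: "x \<in> V" and yn: "y \<in> nbrs V E x" using that G by (auto simp: R_def nbrs_def connected_undirected_graph_def)
    have "(a x - a y)^2 \<le> Ms V E a x" unfolding Ms_def by (rule Max_ge) (use yn fin_nbrs in auto)
    also have "\<dots> \<le> W" unfolding W_def
      by (rule member_le_sum[OF xV]) (auto intro: Ms_nonneg simp: finV)
    finally have "sqrt ((a x - a y)^2) \<le> sqrt W" by (rule real_sqrt_le_mono)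
    then show ?thesis by simp
  qed
  have pw: "\<bar>a u - a v\<bar> \<le> real n * sqrt W" if "(u,v) \<in> R ^^ n" for n u v
    using that
  proof (induction n arbitrary: v)
    case 0 then show ?case by simp
  next
    case (Suc n)
    then obtain z where z: "(u,z) \<in> R ^^ n" "(z,v) \<in> R" by auto
    have "\<bar>a u - a v\<bar> \<le> \<bar>a u - a z\<bar> + \<bar>a z - a v\<bar>" by simp
    also have "\<dots> \<le> real n * sqrt W + sqrt W" using Suc.IH[OF z(1)] edge[OF z(2)] by simp
    finally show ?case by (simp add: algebra_simps)
  qed
  have uv: "\<bar>a u - a v\<bar> \<le> N^2 * sqrt W" if "u \<in> V" "v \<in> V" for u v
  proof -
    have "(\<lambda>x y. E x y \<and> x \<noteq> y)\<^sup>*\<^sup>* u v" using G that by (auto simp: connected_undirected_graph_def)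
    then have "(u,v) \<in> R\<^sup>*" unfolding R_def by (simp add: rtranclp_rtrancl_eq)
    then obtain n where n: "n \<le> card R" "(u,v) \<in> R ^^ n" using rtrancl_finite_eq_relpow[OF finR] by auto
    have "\<bar>a u - a v\<bar> \<le> real n * sqrt W" by (rule pw[OF n(2)])
    also have "\<dots> \<le> N^2 * sqrt W"
    proof (rule mult_right_mono)
      have "n \<le> card V * card V" using n(1) cardR by linarith
      then show "real n \<le> N^2" unfolding N_def power2_eq_square by (metis of_nat_le_iff of_nat_mult)
    qed (simp add: W0)
    finally show ?thesis .
  qed
  have uc: "(a u - c)^2 \<le> N^4 * W" if u: "u \<in> V" for u
  proof -
    have "a u - c = (\<Sum>v\<in>V. a u - a v) / N" using Npos unfolding c N_def
      by (simp add: sum_subtractf field_simps)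
    then have "\<bar>a u - c\<bar> = \<bar>\<Sum>v\<in>V. a u - a v\<bar> / N" using Npos by simp
    also have "\<dots> \<le> (\<Sum>v\<in>V. \<bar>a u - a v\<bar>) / N" using Npos by (intro divide_right_mono sum_abs) auto
    also have "\<dots> \<le> (\<Sum>v\<in>V. N^2 * sqrt W) / N" using Npos uv[OF u] by (intro divide_right_mono sum_mono) auto
    also have "\<dots> = N^2 * sqrt W" using Npos by (simp add: N_def)
    finally have "\<bar>a u - c\<bar> \<le> N^2 * sqrt W" .
    then have "\<bar>a u - c\<bar>^2 \<le> (N^2 * sqrt W)^2" by (rule power_mono) simp
    also have "\<dots> = N^4 * W" using W0 by (simp add: power_mult_distrib)
    finally show ?thesis by simp
  qed
  have "Fv V c a \<le> (\<Sum>u\<in>V. N^4 * W)" unfolding Fv_def by (rule sum_mono) (rule uc)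
  also have "\<dots> = N^5 * W" by (simp add: N_def numeral_eq_Suc)
  finally show ?thesis unfolding N_def W_def .
qed

end

theorem theorem1:
  fixes V :: "'a set" and E :: "'a \<Rightarrow> 'a \<Rightarrow> bool" and p :: real
    and a0 :: "'a \<Rightarrow> real" and sel :: "nat \<Rightarrow> ('a \<Rightarrow> real) \<Rightarrow> 'a \<Rightarrow> 'a set \<Rightarrow> 'a"
  assumes "connected_undirected_graph V E"
    and "card V \<ge> 2"
    and "0 \<le> p" and "p \<le> 1"
    and "valid_tiebreak V E sel"
  shows "(\<lambda>l. measure_pmf.expectation (sgg_dist V E p sel a0 l)
            (\<lambda>a. \<Sum>s\<in>V. (a s - (\<Sum>u\<in>V. a0 u) / real (card V))^2))
         \<longlonglongrightarrow> 0"
proof -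
  define N where "N = real (card V)"
  define c where "c = (\<Sum>u\<in>V. a0 u) / real (card V)"
  define k where "k = 1 / (2 * N^7)"
  have N2: "N \<ge> 2" using assms(2) N_def by simp
  have N7: "N^7 \<ge> 1" using N2 by (simp add: one_le_power)
  have N7p: "0 < N^7" using N7 by linarith
  have k0: "0 < k" "k \<le> 1/2"
  proof -
    show "0 < k" unfolding k_def using N7p by simp
    have "1 / (2 * N^7) \<le> 1 / (2 * 1)" using N7 N7p by (intro divide_left_mono) auto
    then show "k \<le> 1/2" unfolding k_def by simp
  qed
  have step: "measure_pmf.expectation (sgg_step V E p sel l a) (Fv V c) \<le> (1 - k) * Fv V c a"
    if sa: "(\<Sum>x\<in>V. a x) = (\<Sum>x\<in>V. a0 x)" for l a
  proof -
    define W where "W = (\<Sum>s\<in>V. Ms V E a s)"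
    have "c = (\<Sum>x\<in>V. a x) / real (card V)" using sa c_def by simp
    then have P: "Fv V c a \<le> N^5 * W" unfolding N_def W_def by (rule poinc[OF assms])
    have "measure_pmf.expectation (sgg_step V E p sel l a) (Fv V c) \<le> Fv V c a - W / (2 * N^2)"
      unfolding W_def N_def by (rule step_exp[OF assms])
    also have "\<dots> \<le> (1 - k) * Fv V c a"
    proof -
      have "Fv V c a / (2 * N^7) \<le> N^5 * W / (2 * N^7)" using P N2 by (intro divide_right_mono) auto
      also have "\<dots> = W / (2 * N^2)" using N2 by (simp add: field_simps power_add[symmetric] numeral_eq_Suc)
      finally show ?thesis unfolding k_def by (simp add: algebra_simps)
    qed
    finally show ?thesis .
  qed
  have bound: "measure_pmf.expectation (sgg_dist V E p sel a0 l) (Fv V c) \<le> (1 - k)^l * Fv V c a0" for l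
  proof (induction l)
    case 0 then show ?case by simp
  next
    case (Suc l)
    let ?D = "sgg_dist V E p sel a0 l"
    have inv: "finite (set_pmf ?D)" "\<And>a. a \<in> set_pmf ?D \<Longrightarrow> (\<Sum>x\<in>V. a x) = (\<Sum>x\<in>V. a0 x)"
      using dist_inv[OF assms, of a0 l] by auto
    have intD: "integrable ?D f" for f :: "_ \<Rightarrow> real" by (rule integrable_measure_pmf_finite[OF inv(1)])
    have "measure_pmf.expectation (sgg_dist V E p sel a0 (Suc l)) (Fv V c)
        = measure_pmf.expectation ?D (\<lambda>a. measure_pmf.expectation (sgg_step V E p sel (Suc l) a) (Fv V c))"
      by (simp only: sgg_dist.simps) (rule exp_bind[OF inv(1) step_fin[OF assms]])
    also have "\<dots> \<le> measure_pmf.expectation ?D (\<lambda>a. (1 - k) * Fv V c a)"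
    proof (rule integral_mono_AE[OF intD intD])
      show "AE a in measure_pmf ?D. measure_pmf.expectation (sgg_step V E p sel (Suc l) a) (Fv V c) \<le> (1 - k) * Fv V c a"
        by (rule AE_pmfI) (rule step[OF inv(2)])
    qed
    also have "\<dots> = (1 - k) * measure_pmf.expectation ?D (Fv V c)" by simp
    also have "\<dots> \<le> (1 - k) * ((1 - k)^l * Fv V c a0)" using Suc k0 by (intro mult_left_mono) auto
    finally show ?case by simp
  qed
  have nn: "0 \<le> measure_pmf.expectation (sgg_dist V E p sel a0 l) (Fv V c)" for l
    unfolding Fv_def by (intro integral_nonneg_AE AE_I2 sum_nonneg) simp
  have lim: "(\<lambda>l. (1 - k)^l * Fv V c a0) \<longlonglongrightarrow> 0"
  proof -
    have "(\<lambda>l. (1 - k)^l) \<longlonglongrightarrow> 0" using k0 by (intro LIMSEQ_power_zero) auto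
    then have "(\<lambda>l. (1 - k)^l * Fv V c a0) \<longlonglongrightarrow> 0 * Fv V c a0" by (intro tendsto_mult tendsto_const)
    then show ?thesis by simp
  qed
  have "(\<lambda>l. measure_pmf.expectation (sgg_dist V E p sel a0 l) (Fv V c)) \<longlonglongrightarrow> 0"
    by (rule tendsto_sandwich[OF _ _ tendsto_const lim]) (simp_all add: nn bound)
  then show ?thesis unfolding Fv_def c_def .
qed

end
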